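(* Let $\mathbb{A}$ be a 2-category and $p:e\to b$ a 1-cell such that $\mathbb{A}$ has the two-dimensional cokernel diagram of $p$ and $p$ has a codensity monad, i.e. a right Kan extension $(t,\gamma)$ of $p$ along $p$ exists. Then there is a unique 1-cell $\ell:b\uparrow_p b\to b$ such that $\ell\delta^0=\mathrm{id}_b$, $\ell\delta^1=t$ and $\mathrm{id}_\ell\ast\alpha=\gamma$; moreover the right Kan extension of $\mathrm{id}_b$ along $\delta^0$ exists and is given by the pair $(\ell,\mathrm{id}_{\mathrm{id}_b})$.
   Context: A 2-category is a $\mathbf{Cat}$-enriched category; composition of 1-cells is juxtaposition, vertical composition of 2-cells is $\cdot$, horizontal composition is $\ast$, $\mathrm{id}_f$ is the identity 2-cell on $f$. Opcomma object of $p$ along itself: an object $b\uparrow_p b$ with 1-cells $\delta^0,\delta^1:b\to b\uparrow_p b$ and a 2-cell $\alpha:\delta^1p\Rightarrow\delta^0p$ such that for every object $y$ the functor $h\mapsto(h\delta^0,h\delta^1,\mathrm{id}_h\ast\alpha)$, $\xi\mapsto(\xi\ast\mathrm{id}_{\delta^0},\xi\ast\mathrm{id}_{\delta^1})$ is an isomorphism from $\mathbb{A}(b\uparrow_p b,y)$ onto the category of triples $(h_0,h_1:b\to y,\ \beta:h_1p\Rightarrow h_0p)$ with morphisms pairs of 2-cells $(\xi_0:h_0\Rightarrow h_0',\xi_1:h_1\Rightarrow h_1')$ satisfying $(\xi_0\ast\mathrm{id}_p)\cdot\beta=\beta'\cdot(\xi_1\ast\mathrm{id}_p)$. Two-dimensional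 pushout of a span $f_0:c\to c_0$, $f_1:c\to c_1$: an object $P$ with $q_0:c_0\to P$, $q_1:c_1\to P$, $q_0f_0=q_1f_1$, such that for every $y$, $k\mapsto(kq_0,kq_1)$ is an isomorphism from $\mathbb{A}(P,y)$ onto the category of pairs $(k_0,k_1)$ with $k_0f_0=k_1f_1$, whose morphisms are pairs of 2-cells $(\xi_0,\xi_1)$ with $\xi_0\ast\mathrm{id}_{f_0}=\xi_1\ast\mathrm{id}_{f_1}$. $\mathbb{A}$ has the two-dimensional cokernel diagram of $p$ if it has an opcomma object $b\uparrow_p b$ of $p$ along itself and a two-dimensional pushout $b\uparrow_pb\uparrow_pb$ of the span $(\delta^0,\delta^1)$, with 1-cells $D^0,D^2:b\uparrow_pb\to b\uparrow_pb\uparrow_pb$ satisfying $D^2\delta^0=D^0\delta^1$. Right Kan extension of $f:z\to y$ along $g:z\to x$: a pair $(r:x\to y,\gamma:rg\Rightarrow f)$ such that for each $k:x\to y$, $\beta\mapsto\gamma\cdot(\beta\ast\mathrm{id}_g)$ is a bijection from 2-cells $k\Rightarrow r$ to 2-cells $kg\Rightarrow f$. *)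

theory Defs
  imports Main
begin

text \<open>A (strict) 2-category, i.e. a Cat-enriched category, presented by its
objects (type 'o), 1-cells (type 'a) and 2-cells (type 'c).
comp1 g f is the juxtaposition g f (first f, then g);
vcomp b a is b \<cdot> a (first a, then b); hcomp x y is x \<ast> y, for
x : g \<Rightarrow> g', y : f \<Rightarrow> f' it is a 2-cell g f \<Rightarrow> g' f'.\<close>

record ('o,'a,'c) twocat =
  dom1 :: "'a \<Rightarrow> 'o"
  cod1 :: "'a \<Rightarrow> 'o"
  id1 :: "'o \<Rightarrow> 'a"
  comp1 :: "'a \<Rightarrow> 'a \<Rightarrow> 'a"
  dom2 :: "'c \<Rightarrow> 'a"
  cod2 :: "'c \<Rightarrow> 'a"
  id2 :: "'a \<Rightarrow> 'c"
  vcomp :: "'c \<Rightarrow> 'c \<Rightarrow> 'c"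
  hcomp :: "'c \<Rightarrow> 'c \<Rightarrow> 'c"

definition hom1 :: "('o,'a,'c,'m) twocat_scheme \<Rightarrow> 'o \<Rightarrow> 'o \<Rightarrow> 'a set" where
  "hom1 C x y = {f. dom1 C f = x \<and> cod1 C f = y}"

definition hom2 :: "('o,'a,'c,'m) twocat_scheme \<Rightarrow> 'a \<Rightarrow> 'a \<Rightarrow> 'c set" where
  "hom2 C f g = {a. dom2 C a = f \<and> cod2 C a = g}"

definition two_category :: "('o,'a,'c,'m) twocat_scheme \<Rightarrow> bool" where
  "two_category C \<longleftrightarrow>
    \<comment> \<open>underlying category of 1-cells\<close>
    (\<forall>x. dom1 C (id1 C x) = x \<and> cod1 C (id1 C x) = x) \<and>
    (\<forall>f g. dom1 C g = cod1 C f \<longrightarrow>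
        dom1 C (comp1 C g f) = dom1 C f \<and> cod1 C (comp1 C g f) = cod1 C g) \<and>
    (\<forall>f. comp1 C (id1 C (cod1 C f)) f = f \<and> comp1 C f (id1 C (dom1 C f)) = f) \<and>
    (\<forall>f g h. dom1 C g = cod1 C f \<and> dom1 C h = cod1 C g \<longrightarrow>
        comp1 C h (comp1 C g f) = comp1 C (comp1 C h g) f) \<and>
    \<comment> \<open>hom-categories: 2-cells go between parallel 1-cells\<close>
    (\<forall>a. dom1 C (dom2 C a) = dom1 C (cod2 C a) \<and> cod1 C (dom2 C a) = cod1 C (cod2 C a)) \<and>
    (\<forall>f. dom2 C (id2 C f) = f \<and> cod2 C (id2 C f) = f) \<and>
    (\<forall>a b. dom2 C b = cod2 C a \<longrightarrow>
        dom2 C (vcomp C b a) = dom2 C a \<and> cod2 C (vcomp C b a) = cod2 C b) \<and>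
    (\<forall>a. vcomp C (id2 C (cod2 C a)) a = a \<and> vcomp C a (id2 C (dom2 C a)) = a) \<and>
    (\<forall>a b c. dom2 C b = cod2 C a \<and> dom2 C c = cod2 C b \<longrightarrow>
        vcomp C c (vcomp C b a) = vcomp C (vcomp C c b) a) \<and>
    \<comment> \<open>composition functors\<close>
    (\<forall>x y. dom1 C (dom2 C x) = cod1 C (dom2 C y) \<longrightarrow>
        dom2 C (hcomp C x y) = comp1 C (dom2 C x) (dom2 C y) \<and>
        cod2 C (hcomp C x y) = comp1 C (cod2 C x) (cod2 C y)) \<and>
    (\<forall>f g. dom1 C g = cod1 C f \<longrightarrow> hcomp C (id2 C g) (id2 C f) = id2 C (comp1 C g f)) \<and>
    (\<forall>x x' y y'. dom2 C x' = cod2 C x \<and> dom2 C y' = cod2 C y \<and>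
        dom1 C (dom2 C x) = cod1 C (dom2 C y) \<longrightarrow>
        hcomp C (vcomp C x' x) (vcomp C y' y) = vcomp C (hcomp C x' y') (hcomp C x y)) \<and>
    \<comment> \<open>strict associativity and unitality of horizontal composition\<close>
    (\<forall>x y z. dom1 C (dom2 C y) = cod1 C (dom2 C x) \<and> dom1 C (dom2 C z) = cod1 C (dom2 C y) \<longrightarrow>
        hcomp C z (hcomp C y x) = hcomp C (hcomp C z y) x) \<and>
    (\<forall>a. hcomp C (id2 C (id1 C (cod1 C (dom2 C a)))) a = a \<and>
         hcomp C a (id2 C (id1 C (dom1 C (dom2 C a)))) = a)"

text \<open>Opcomma object (B, d0, d1, al) of p : e \<rightarrow> b along itself. The comparison functor
A(B,y) \<rightarrow> triples is an isomorphism: bijective on objects and on each hom-set.\<close>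
definition is_opcomma :: "('o,'a,'c,'m) twocat_scheme \<Rightarrow> 'a \<Rightarrow> 'o \<Rightarrow> 'a \<Rightarrow> 'a \<Rightarrow> 'c \<Rightarrow> bool" where
  "is_opcomma C p B d0 d1 al \<longleftrightarrow>
    d0 \<in> hom1 C (cod1 C p) B \<and> d1 \<in> hom1 C (cod1 C p) B \<and>
    al \<in> hom2 C (comp1 C d1 p) (comp1 C d0 p) \<and>
    (\<forall>y. bij_betw (\<lambda>h. (comp1 C h d0, comp1 C h d1, hcomp C (id2 C h) al))
            (hom1 C B y)
            {(h0, h1, be). h0 \<in> hom1 C (cod1 C p) y \<and> h1 \<in> hom1 C (cod1 C p) y \<and>
                 be \<in> hom2 C (comp1 C h1 p) (comp1 C h0 p)} \<and>
         (\<forall>h\<in>hom1 C B y. \<forall>h'\<in>hom1 C B y.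
            bij_betw (\<lambda>xi. (hcomp C xi (id2 C d0), hcomp C xi (id2 C d1)))
              (hom2 C h h')
              {(xi0, xi1). xi0 \<in> hom2 C (comp1 C h d0) (comp1 C h' d0) \<and>
                 xi1 \<in> hom2 C (comp1 C h d1) (comp1 C h' d1) \<and>
                 vcomp C (hcomp C xi0 (id2 C p)) (hcomp C (id2 C h) al) =
                 vcomp C (hcomp C (id2 C h') al) (hcomp C xi1 (id2 C p))}))"

definition is_2pushout :: "('o,'a,'c,'m) twocat_scheme \<Rightarrow> 'a \<Rightarrow> 'a \<Rightarrow> 'o \<Rightarrow> 'a \<Rightarrow> 'a \<Rightarrow> bool" where
  "is_2pushout C f0 f1 P q0 q1 \<longleftrightarrow>
    dom1 C f0 = dom1 C f1 \<and>
    q0 \<in> hom1 C (cod1 C f0) P \<and> q1 \<in> hom1 C (cod1 C f1) P \<and>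
    comp1 C q0 f0 = comp1 C q1 f1 \<and>
    (\<forall>y. bij_betw (\<lambda>k. (comp1 C k q0, comp1 C k q1))
            (hom1 C P y)
            {(k0, k1). k0 \<in> hom1 C (cod1 C f0) y \<and> k1 \<in> hom1 C (cod1 C f1) y \<and>
                 comp1 C k0 f0 = comp1 C k1 f1} \<and>
         (\<forall>k\<in>hom1 C P y. \<forall>k'\<in>hom1 C P y.
            bij_betw (\<lambda>xi. (hcomp C xi (id2 C q0), hcomp C xi (id2 C q1)))
              (hom2 C k k')
              {(xi0, xi1). xi0 \<in> hom2 C (comp1 C k q0) (comp1 C k' q0) \<and>
                 xi1 \<in> hom2 C (comp1 C k q1) (comp1 C k' q1) \<and>
                 hcomp C xi0 (id2 C f0) = hcomp C xi1 (id2 C f1)}))"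

definition is_ran :: "('o,'a,'c,'m) twocat_scheme \<Rightarrow> 'a \<Rightarrow> 'a \<Rightarrow> 'a \<Rightarrow> 'c \<Rightarrow> bool" where
  "is_ran C f g r ga \<longleftrightarrow>
    dom1 C f = dom1 C g \<and>
    r \<in> hom1 C (cod1 C g) (cod1 C f) \<and>
    ga \<in> hom2 C (comp1 C r g) f \<and>
    (\<forall>k\<in>hom1 C (cod1 C g) (cod1 C f).
       bij_betw (\<lambda>be. vcomp C ga (hcomp C be (id2 C g))) (hom2 C k r) (hom2 C (comp1 C k g) f))"

end

theory Submission
  imports Defs
begin

theorem proposition4p1:
  fixes C :: "('o,'a,'c) twocat"
  assumes "two_category C"
    and "p \<in> hom1 C e b"
    and "is_opcomma C p B d0 d1 al"
    and "is_2pushout C d0 d1 B3 D2 D0"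
    and "is_ran C p p t ga"
  shows "\<exists>l. l \<in> hom1 C B b \<and> comp1 C l d0 = id1 C b \<and> comp1 C l d1 = t \<and>
             hcomp C (id2 C l) al = ga \<and>
             (\<forall>l'. l' \<in> hom1 C B b \<and> comp1 C l' d0 = id1 C b \<and> comp1 C l' d1 = t \<and>
                    hcomp C (id2 C l') al = ga \<longrightarrow> l' = l) \<and>
             is_ran C (id1 C b) d0 l (id2 C (id1 C b))"
proof -
  note TC = assms(1)[unfolded two_category_def]
  have A1: "\<And>x. dom1 C (id1 C x) = x \<and> cod1 C (id1 C x) = x" using TC[THEN conjunct1] by blast
  have A2: "\<And>f g. dom1 C g = cod1 C f \<Longrightarrow>
        dom1 C (comp1 C g f) = dom1 C f \<and> cod1 C (comp1 C g f) = cod1 C g" using TC[THEN conjunct2, THEN conjunct1] by blast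
  have A3: "\<And>f. comp1 C (id1 C (cod1 C f)) f = f \<and> comp1 C f (id1 C (dom1 C f)) = f" using TC[THEN conjunct2, THEN conjunct2, THEN conjunct1] by blast
  have A4: "\<And>f g h. dom1 C g = cod1 C f \<Longrightarrow> dom1 C h = cod1 C g \<Longrightarrow>
        comp1 C h (comp1 C g f) = comp1 C (comp1 C h g) f" using TC[THEN conjunct2, THEN conjunct2, THEN conjunct2, THEN conjunct1] by blast
  have A6: "\<And>f. dom2 C (id2 C f) = f \<and> cod2 C (id2 C f) = f" using TC[THEN conjunct2, THEN conjunct2, THEN conjunct2, THEN conjunct2, THEN conjunct2, THEN conjunct1] by blast
  have A7: "\<And>a b. dom2 C b = cod2 C a \<Longrightarrow>
        dom2 C (vcomp C b a) = dom2 C a \<and> cod2 C (vcomp C b a) = cod2 C b" using TC[THEN conjunct2, THEN conjunct2, THEN conjunct2, THEN conjunct2, THEN conjunct2, THEN conjunct2, THEN conjunct1] by blast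
  have A8: "\<And>a. vcomp C (id2 C (cod2 C a)) a = a \<and> vcomp C a (id2 C (dom2 C a)) = a" using TC[THEN conjunct2, THEN conjunct2, THEN conjunct2, THEN conjunct2, THEN conjunct2, THEN conjunct2, THEN conjunct2, THEN conjunct1] by blast
  have A10: "\<And>x y. dom1 C (dom2 C x) = cod1 C (dom2 C y) \<Longrightarrow>
        dom2 C (hcomp C x y) = comp1 C (dom2 C x) (dom2 C y) \<and>
        cod2 C (hcomp C x y) = comp1 C (cod2 C x) (cod2 C y)" using TC[THEN conjunct2, THEN conjunct2, THEN conjunct2, THEN conjunct2, THEN conjunct2, THEN conjunct2, THEN conjunct2, THEN conjunct2, THEN conjunct2, THEN conjunct1] by blast
  have p: "dom1 C p = e" "cod1 C p = b" using assms(2) by (auto simp: hom1_def)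
  note OC = assms(3)[unfolded is_opcomma_def p]
  have d0: "dom1 C d0 = b" "cod1 C d0 = B" and d1: "dom1 C d1 = b" "cod1 C d1 = B"
    using OC by (auto simp: hom1_def)
  have al: "dom2 C al = comp1 C d1 p" "cod2 C al = comp1 C d0 p" using OC by (auto simp: hom2_def)
  have OC1: "\<And>y. bij_betw (\<lambda>h. (comp1 C h d0, comp1 C h d1, hcomp C (id2 C h) al))
            (hom1 C B y)
            {(h0, h1, be). h0 \<in> hom1 C b y \<and> h1 \<in> hom1 C b y \<and>
                 be \<in> hom2 C (comp1 C h1 p) (comp1 C h0 p)}" using OC by blast
  have OC2: "\<And>y h h'. h\<in>hom1 C B y \<Longrightarrow> h'\<in>hom1 C B y \<Longrightarrow>
            bij_betw (\<lambda>xi. (hcomp C xi (id2 C d0), hcomp C xi (id2 C d1)))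
              (hom2 C h h')
              {(xi0, xi1). xi0 \<in> hom2 C (comp1 C h d0) (comp1 C h' d0) \<and>
                 xi1 \<in> hom2 C (comp1 C h d1) (comp1 C h' d1) \<and>
                 vcomp C (hcomp C xi0 (id2 C p)) (hcomp C (id2 C h) al) =
                 vcomp C (hcomp C (id2 C h') al) (hcomp C xi1 (id2 C p))}" using OC by blast
  note RA = assms(5)[unfolded is_ran_def p]
  have t: "dom1 C t = b" "cod1 C t = b" using RA by (auto simp: hom1_def)
  have ga: "dom2 C ga = comp1 C t p" "cod2 C ga = p" using RA by (auto simp: hom2_def)
  have R: "\<And>k. k \<in> hom1 C b b \<Longrightarrow>
       bij_betw (\<lambda>be. vcomp C ga (hcomp C be (id2 C p))) (hom2 C k t) (hom2 C (comp1 C k p) p)"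
    using RA by blast
  have idp: "comp1 C (id1 C b) p = p" using A3[of p] p by simp
  have trip: "(id1 C b, t, ga) \<in> {(h0, h1, be). h0 \<in> hom1 C b b \<and> h1 \<in> hom1 C b b \<and>
                 be \<in> hom2 C (comp1 C h1 p) (comp1 C h0 p)}"
    using A1 t ga idp by (auto simp: hom1_def hom2_def)
  then obtain l where l: "l \<in> hom1 C B b"
      and leq: "(comp1 C l d0, comp1 C l d1, hcomp C (id2 C l) al) = (id1 C b, t, ga)"
  proof -
    have "(id1 C b, t, ga) \<in> (\<lambda>h. (comp1 C h d0, comp1 C h d1, hcomp C (id2 C h) al)) ` hom1 C B b"
      using trip bij_betw_imp_surj_on[OF OC1[of b]] by simp
    then show ?thesis using that by (elim imageE) simp
  qed
  have l0: "comp1 C l d0 = id1 C b" and l1: "comp1 C l d1 = t" and la: "hcomp C (id2 C l) al = ga"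
    using leq by auto
  have uniq: "\<forall>l'. l' \<in> hom1 C B b \<and> comp1 C l' d0 = id1 C b \<and> comp1 C l' d1 = t \<and>
                    hcomp C (id2 C l') al = ga \<longrightarrow> l' = l"
  proof (intro allI impI)
    fix l' assume h: "l' \<in> hom1 C B b \<and> comp1 C l' d0 = id1 C b \<and> comp1 C l' d1 = t \<and>
                    hcomp C (id2 C l') al = ga"
    have "inj_on (\<lambda>h. (comp1 C h d0, comp1 C h d1, hcomp C (id2 C h) al)) (hom1 C B b)"
      using OC1[of b] unfolding bij_betw_def by blast
    moreover have "(comp1 C l' d0, comp1 C l' d1, hcomp C (id2 C l') al) = (comp1 C l d0, comp1 C l d1, hcomp C (id2 C l) al)"
      using h leq by simp
    ultimately show "l' = l" using h l by (metis (no_types, lifting) inj_onD)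
  qed
  have ldom: "dom1 C l = B" "cod1 C l = b" using l by (auto simp: hom1_def)
  have ran: "is_ran C (id1 C b) d0 l (id2 C (id1 C b))"
    unfolding is_ran_def
  proof (intro conjI ballI)
    show "dom1 C (id1 C b) = dom1 C d0" using A1 d0 by simp
    show "l \<in> hom1 C (cod1 C d0) (cod1 C (id1 C b))" using l d0 A1 by simp
    show "id2 C (id1 C b) \<in> hom2 C (comp1 C l d0) (id1 C b)" using A6 l0 by (simp add: hom2_def)
    fix k assume k0: "k \<in> hom1 C (cod1 C d0) (cod1 C (id1 C b))"
    then have k: "dom1 C k = B" "cod1 C k = b" using d0 A1 by (auto simp: hom1_def)
    have kB: "k \<in> hom1 C B b" using k by (simp add: hom1_def)
    have kd1: "comp1 C k d1 \<in> hom1 C b b" using A2[where f=d1 and g=k] k d1 by (simp add: hom1_def)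
    have Fs: "vcomp C (id2 C (id1 C b)) (hcomp C be (id2 C d0)) = hcomp C be (id2 C d0)"
      if "be \<in> hom2 C k l" for be
    proof -
      have "dom1 C (dom2 C be) = cod1 C (dom2 C (id2 C d0))" using that k A6 d0 by (simp add: hom2_def)
      then have "cod2 C (hcomp C be (id2 C d0)) = id1 C b" using A10 that A6 l0 by (simp add: hom2_def)
      then show ?thesis using A8 by metis
    qed
    note B = OC2[OF kB l]
    have Bl: "comp1 C l d0 = id1 C b" "comp1 C l d1 = t" "hcomp C (id2 C l) al = ga"
      using l0 l1 la by auto
    note B' = B[unfolded Bl]
    note Rk = R[OF kd1]
    show "bij_betw (\<lambda>be. vcomp C (id2 C (id1 C b)) (hcomp C be (id2 C d0))) (hom2 C k l)
          (hom2 C (comp1 C k d0) (id1 C b))"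
    proof -
      have "bij_betw (\<lambda>be. hcomp C be (id2 C d0)) (hom2 C k l) (hom2 C (comp1 C k d0) (id1 C b))"
        unfolding bij_betw_def
      proof (intro conjI)
        show "inj_on (\<lambda>be. hcomp C be (id2 C d0)) (hom2 C k l)"
        proof (rule inj_onI)
          fix x y assume x: "x \<in> hom2 C k l" and y: "y \<in> hom2 C k l"
            and e: "hcomp C x (id2 C d0) = hcomp C y (id2 C d0)"
          have xS: "hcomp C x (id2 C d1) \<in> hom2 C (comp1 C k d1) t \<and> vcomp C (hcomp C (hcomp C x (id2 C d0)) (id2 C p)) (hcomp C (id2 C k) al) = vcomp C ga (hcomp C (hcomp C x (id2 C d1)) (id2 C p))"
            using bij_betw_apply[OF B' x] by simp
          have yS: "hcomp C y (id2 C d1) \<in> hom2 C (comp1 C k d1) t \<and> vcomp C (hcomp C (hcomp C y (id2 C d0)) (id2 C p)) (hcomp C (id2 C k) al) = vcomp C ga (hcomp C (hcomp C y (id2 C d1)) (id2 C p))"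
            using bij_betw_apply[OF B' y] by simp
          have inj1: "inj_on (\<lambda>be. vcomp C ga (hcomp C be (id2 C p))) (hom2 C (comp1 C k d1) t)"
            using Rk by (simp add: bij_betw_def)
          have "vcomp C ga (hcomp C (hcomp C x (id2 C d1)) (id2 C p)) = vcomp C ga (hcomp C (hcomp C y (id2 C d1)) (id2 C p))"
            using xS yS e by simp
          then have e1: "hcomp C x (id2 C d1) = hcomp C y (id2 C d1)"
            using inj1 xS yS by (simp add: inj_on_def)
          have inj2: "inj_on (\<lambda>xi. (hcomp C xi (id2 C d0), hcomp C xi (id2 C d1))) (hom2 C k l)"
            using B' by (simp add: bij_betw_def)
          show "x = y" using inj_onD[OF inj2 _ x y] e e1 by simp
        qed
        show "(\<lambda>be. hcomp C be (id2 C d0)) ` hom2 C k l = hom2 C (comp1 C k d0) (id1 C b)"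
        proof
          show "(\<lambda>be. hcomp C be (id2 C d0)) ` hom2 C k l \<subseteq> hom2 C (comp1 C k d0) (id1 C b)"
          proof
            fix z assume "z \<in> (\<lambda>be. hcomp C be (id2 C d0)) ` hom2 C k l"
            then obtain be where be: "be \<in> hom2 C k l" and z: "z = hcomp C be (id2 C d0)" by blast
            show "z \<in> hom2 C (comp1 C k d0) (id1 C b)" using bij_betw_apply[OF B' be] z by simp
          qed
          show "hom2 C (comp1 C k d0) (id1 C b) \<subseteq> (\<lambda>be. hcomp C be (id2 C d0)) ` hom2 C k l"
          proof
            fix x0 assume x0: "x0 \<in> hom2 C (comp1 C k d0) (id1 C b)"
            define g where "g = vcomp C (hcomp C x0 (id2 C p)) (hcomp C (id2 C k) al)"
            have c1: "dom1 C (dom2 C (id2 C k)) = cod1 C (dom2 C al)"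
              using A6 al A2[where f=p and g=d1] d1 p k by simp
            have kal: "dom2 C (hcomp C (id2 C k) al) = comp1 C k (comp1 C d1 p)"
                 "cod2 C (hcomp C (id2 C k) al) = comp1 C k (comp1 C d0 p)"
              using A10[OF c1] A6 al by auto
            have kd0: "dom1 C (comp1 C k d0) = b" "cod1 C (comp1 C k d0) = b"
              using A2[where f=d0 and g=k] k d0 by auto
            have c2: "dom1 C (dom2 C x0) = cod1 C (dom2 C (id2 C p))"
              using x0 kd0 A6 p by (simp add: hom2_def)
            have x0p: "dom2 C (hcomp C x0 (id2 C p)) = comp1 C (comp1 C k d0) p"
                 "cod2 C (hcomp C x0 (id2 C p)) = p"
              using A10[OF c2] A6 x0 idp by (auto simp: hom2_def)
            have as0: "comp1 C k (comp1 C d0 p) = comp1 C (comp1 C k d0) p"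
              using A4[where f=p and g=d0 and h=k] p d0 k by simp
            have as1: "comp1 C k (comp1 C d1 p) = comp1 C (comp1 C k d1) p"
              using A4[where f=p and g=d1 and h=k] p d1 k by simp
            have "g \<in> hom2 C (comp1 C (comp1 C k d1) p) p"
              unfolding g_def hom2_def using A7[where a="hcomp C (id2 C k) al" and b="hcomp C x0 (id2 C p)"]
                kal x0p as0 as1 by simp
            then obtain x1 where x1: "x1 \<in> hom2 C (comp1 C k d1) t"
                and x1e: "vcomp C ga (hcomp C x1 (id2 C p)) = g"
            proof -
              have "g \<in> (\<lambda>be. vcomp C ga (hcomp C be (id2 C p))) ` hom2 C (comp1 C k d1) t"
                using bij_betw_imp_surj_on[OF Rk] \<open>g \<in> _\<close> by simp
              then show ?thesis using that by (elim imageE) simp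
            qed
            have "(x0, x1) \<in> {(xi0, xi1). xi0 \<in> hom2 C (comp1 C k d0) (id1 C b) \<and>
                 xi1 \<in> hom2 C (comp1 C k d1) t \<and>
                 vcomp C (hcomp C xi0 (id2 C p)) (hcomp C (id2 C k) al) =
                 vcomp C ga (hcomp C xi1 (id2 C p))}"
              using x0 x1 x1e g_def by simp
            then obtain be where "be \<in> hom2 C k l"
                and "(hcomp C be (id2 C d0), hcomp C be (id2 C d1)) = (x0, x1)"
            proof -
              have "(x0, x1) \<in> (\<lambda>xi. (hcomp C xi (id2 C d0), hcomp C xi (id2 C d1))) ` hom2 C k l"
                using bij_betw_imp_surj_on[OF B'] \<open>(x0, x1) \<in> _\<close> by simp
              then show ?thesis using that by (elim imageE) simp
            qed
            then show "x0 \<in> (\<lambda>be. hcomp C be (id2 C d0)) ` hom2 C k l" by force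
          qed
        qed
      qed
      then show ?thesis using Fs by (simp cong: bij_betw_cong)
    qed
  qed
  show ?thesis using l l0 l1 la uniq ran by blast
qed

end
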